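(* Let $G=(V,E)$ be an undirected graph without self-loops, let $\succ$ be a strict total order on $V$, and let $u\ne v$ be vertices with $u$ dominating $v$ and $u\succ v$. Let $\mathcal D$ be a set of constraints of the form $x+\bar y\ge1$ with $x\ne y$, $x$ dominating $y$, $x\succ y$, and ($x=u$ or $x\succ u$), such that $\mathcal D$ contains $x+\bar y\ge1$ for every pair of distinct vertices $(x,y)$ with $x$ dominating $y$, $x\succ y$ and $x\succ u$. Let $\omega$ be the substitution swapping $u$ and $v$ ($u\mapsto v$, $v\mapsto u$, identity elsewhere). Then for every $k\in\mathbb Z\cup\{\infty\}$, $$F_G\cup\mathcal D\cup\{f\le k-1\}\cup\{\neg(u+\bar v\ge1)\}\ \vdash\ (F_G\cup\mathcal D\cup\{u+\bar v\ge1\})|_\omega\cup\{f|_\omega\le f\},$$ i.e. the redundance-based strengthening condition (with the trivial preorder) holds for deriving $u+\bar v\ge1$ from core set $F_G$ and derived set $\mathcal D$.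
   Context: Each vertex $w\in V$ is identified with a Boolean variable ($w=1$ meaning $w$ is in the clique). $F_G$ is the PB formula consisting of $\bar a+\bar b\ge1$ for all distinct non-adjacent $a,b\in V$; the objective is $f=\sum_{w\in V}\bar w$ (to be minimized). $N(w)=\{w':(w,w')\in E\}$; for distinct $a,b$, $a$ dominates $b$ if $N(a)\setminus\{b\}\supseteq N(b)\setminus\{a\}$. A literal is a variable or its negation $\bar x=1-x$; a PB constraint is $\sum_i a_i\ell_i\ge A$ with negation $\sum_i -a_i\ell_i\ge -A+1$. For a substitution $\omega$, $C|_\omega$ replaces each literal by its image ($\omega(\bar x)=\overline{\omega(x)}$), $G|_\omega$ and $f|_\omega$ likewise. $\vdash$ denotes cutting planes derivability (axioms, literal axioms $\ell\ge0$, positive integer linear combinations, division with rounding up), extended so that $H\vdash D$ whenever $0\ge1$ is derivable from $H\cup\{\neg D\}$; $H\vdash S$ for a set means for each member. $f\le\infty-1$ is the trivially true constraint. *)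

theory Defs
  imports Complex_Main
begin

text \<open>Variables are the elements of a finite type 'v (the vertex set V is UNIV).
A literal is a variable x or its negation (1 - x).\<close>

datatype 'v lit = Pos 'v | Neg 'v

text \<open>A PB constraint is stored in canonical linear form (c, d), meaning
  sum over x of (c x * x) >= d, where every negated literal has been rewritten
  as 1 - x.  Every constraint sum_i a_i l_i >= A has exactly one such form.\<close>

type_synonym 'v pbc = "('v \<Rightarrow> int) \<times> int"

text \<open>A linear expression (c, e) denotes sum over x of (c x * x) + e.\<close>

type_synonym 'v linexp = "('v \<Rightarrow> int) \<times> int"

fun lit_coef :: "'v lit \<Rightarrow> 'v \<Rightarrow> int" where
  "lit_coef (Pos x) y = (if x = y then 1 else 0)"
| "lit_coef (Neg x) y = (if x = y then -1 else 0)"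

fun lit_const :: "'v lit \<Rightarrow> int" where
  "lit_const (Pos x) = 0"
| "lit_const (Neg x) = 1"

definition lin_of_terms :: "(int \<times> 'v lit) list \<Rightarrow> 'v linexp" where
  "lin_of_terms ts =
     ((\<lambda>y. \<Sum>(a, l)\<leftarrow>ts. a * lit_coef l y), (\<Sum>(a, l)\<leftarrow>ts. a * lit_const l))"

definition pbc :: "(int \<times> 'v lit) list \<Rightarrow> int \<Rightarrow> 'v pbc" where
  "pbc ts A = (fst (lin_of_terms ts), A - snd (lin_of_terms ts))"

definition neg_pbc :: "'v pbc \<Rightarrow> 'v pbc" where
  "neg_pbc C = ((\<lambda>x. - fst C x), - snd C + 1)"

definition lin_le :: "'v linexp \<Rightarrow> 'v linexp \<Rightarrow> 'v pbc" where
  "lin_le L1 L2 = ((\<lambda>x. fst L2 x - fst L1 x), snd L1 - snd L2)"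

text \<open>The constraint f <= k - 1 for k in Z \<union> {\<infinity>}; None stands for \<infinity>,
  in which case the constraint is the trivially true constraint 0 >= 0.\<close>

definition obj_le :: "'v linexp \<Rightarrow> int option \<Rightarrow> 'v pbc" where
  "obj_le f k = (case k of
      None \<Rightarrow> ((\<lambda>_. 0), 0)
    | Some k' \<Rightarrow> lin_le f ((\<lambda>_. 0), k' - 1))"

text \<open>A substitution maps every variable to a literal; C|_\<omega> replaces each
  variable x by \<omega> x (and thus each negated literal by the negation of \<omega> x).\<close>

definition subst_lin :: "('v::finite \<Rightarrow> 'v lit) \<Rightarrow> 'v linexp \<Rightarrow> 'v linexp" where
  "subst_lin \<omega> L =
     ((\<lambda>y. \<Sum>x\<in>UNIV. fst L x * lit_coef (\<omega> x) y),
      snd L + (\<Sum>x\<in>UNIV. fst L x * lit_const (\<omega> x)))"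

definition subst_pbc :: "('v::finite \<Rightarrow> 'v lit) \<Rightarrow> 'v pbc \<Rightarrow> 'v pbc" where
  "subst_pbc \<omega> C =
     ((\<lambda>y. \<Sum>x\<in>UNIV. fst C x * lit_coef (\<omega> x) y),
      snd C - (\<Sum>x\<in>UNIV. fst C x * lit_const (\<omega> x)))"

definition swap_subst :: "'v \<Rightarrow> 'v \<Rightarrow> 'v \<Rightarrow> 'v lit" where
  "swap_subst u v x = Pos (if x = u then v else if x = v then u else x)"

definition add_pbc :: "'v pbc \<Rightarrow> 'v pbc \<Rightarrow> 'v pbc" where
  "add_pbc C D = ((\<lambda>x. fst C x + fst D x), snd C + snd D)"

definition mult_pbc :: "int \<Rightarrow> 'v pbc \<Rightarrow> 'v pbc" where
  "mult_pbc m C = ((\<lambda>x. m * fst C x), m * snd C)"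

definition ceil_div :: "int \<Rightarrow> int \<Rightarrow> int" where
  "ceil_div a m = \<lceil>real_of_int a / real_of_int m\<rceil>"

text \<open>Division with rounding up, performed on the normalized form
  sum_x |c x| * l_x >= d + (sum of |c x| over negative c x),
  where l_x = x if c x >= 0 and l_x = 1 - x otherwise; the result is translated
  back to linear form.\<close>

definition div_pbc :: "'v::finite pbc \<Rightarrow> int \<Rightarrow> 'v pbc" where
  "div_pbc C m =
    (let c = fst C;
         N = (\<Sum>x\<in>UNIV. if c x < 0 then - c x else 0)
     in ((\<lambda>x. sgn (c x) * ceil_div \<bar>c x\<bar> m),
         ceil_div (snd C + N) m
           - (\<Sum>x\<in>UNIV. if c x < 0 then ceil_div (- c x) m else 0)))"

inductive cp_derivable :: "'v::finite pbc set \<Rightarrow> 'v pbc \<Rightarrow> bool" where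
  axiom: "C \<in> H \<Longrightarrow> cp_derivable H C"
| lit_axiom_pos: "cp_derivable H (pbc [(1, Pos x)] 0)"
| lit_axiom_neg: "cp_derivable H (pbc [(1, Neg x)] 0)"
| add: "cp_derivable H C \<Longrightarrow> cp_derivable H D \<Longrightarrow> cp_derivable H (add_pbc C D)"
| mult: "m > 0 \<Longrightarrow> cp_derivable H C \<Longrightarrow> cp_derivable H (mult_pbc m C)"
| divide: "m > 0 \<Longrightarrow> cp_derivable H C \<Longrightarrow> cp_derivable H (div_pbc C m)"

definition contradiction :: "'v pbc" where
  "contradiction = ((\<lambda>_. 0), 1)"

definition derives :: "'v::finite pbc set \<Rightarrow> 'v pbc \<Rightarrow> bool" where
  "derives H D \<longleftrightarrow> cp_derivable H D \<or> cp_derivable (insert (neg_pbc D) H) contradiction"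

definition derives_set :: "'v::finite pbc set \<Rightarrow> 'v pbc set \<Rightarrow> bool" where
  "derives_set H S \<longleftrightarrow> (\<forall>D\<in>S. derives H D)"

text \<open>An undirected graph on vertex set UNIV is a symmetric irreflexive E.\<close>

definition nbhd :: "('v \<times> 'v) set \<Rightarrow> 'v \<Rightarrow> 'v set" where
  "nbhd E w = {w'. (w, w') \<in> E}"

definition dominates :: "('v \<times> 'v) set \<Rightarrow> 'v \<Rightarrow> 'v \<Rightarrow> bool" where
  "dominates E a b \<longleftrightarrow> a \<noteq> b \<and> nbhd E b - {a} \<subseteq> nbhd E a - {b}"

definition clique_formula :: "('v \<times> 'v) set \<Rightarrow> 'v pbc set" where
  "clique_formula E = {pbc [(1, Neg a), (1, Neg b)] 1 | a b. a \<noteq> b \<and> (a, b) \<notin> E}"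

definition clique_obj :: "'v set \<Rightarrow> 'v linexp" where
  "clique_obj V = ((\<lambda>y. \<Sum>w\<in>V. lit_coef (Neg w) y), (\<Sum>w\<in>V. lit_const (Neg w)))"

definition dom_clause :: "'v \<Rightarrow> 'v \<Rightarrow> 'v pbc" where
  "dom_clause x y = pbc [(1, Pos x), (1, Neg y)] 1"

end

theory Submission
  imports Defs
begin

definition swp :: "'v \<Rightarrow> 'v \<Rightarrow> 'v \<Rightarrow> 'v" where
  "swp u v x = (if x = u then v else if x = v then u else x)"

lemma swp_eq: "(swp u v x = y) = (x = swp u v y)"
  unfolding swp_def by auto

lemma subst_swap:
  "subst_pbc (swap_subst u v) (C :: 'v::finite pbc) = ((\<lambda>y. fst C (swp u v y)), snd C)"
proof -
  have "(\<Sum>x\<in>UNIV. fst C x * lit_coef (swap_subst u v x) y) = fst C (swp u v y)" for y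
  proof -
    have "(\<Sum>x\<in>UNIV. fst C x * lit_coef (swap_subst u v x) y)
        = (\<Sum>x\<in>UNIV. if x = swp u v y then fst C x else 0)"
      by (rule sum.cong) (auto simp: swap_subst_def swp_eq[symmetric] swp_def)
    also have "\<dots> = fst C (swp u v y)" by simp
    finally show ?thesis .
  qed
  moreover have "(\<Sum>x\<in>UNIV. fst C x * lit_const (swap_subst u v x)) = 0"
    by (simp add: swap_subst_def)
  ultimately show ?thesis by (simp add: subst_pbc_def)
qed

lemma subst_lin_swap:
  "subst_lin (swap_subst u v) (L :: 'v::finite linexp) = ((\<lambda>y. fst L (swp u v y)), snd L)"
proof -
  have "(\<Sum>x\<in>UNIV. fst L x * lit_coef (swap_subst u v x) y) = fst L (swp u v y)" for y
  proof -
    have "(\<Sum>x\<in>UNIV. fst L x * lit_coef (swap_subst u v x) y)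
        = (\<Sum>x\<in>UNIV. if x = swp u v y then fst L x else 0)"
      by (rule sum.cong) (auto simp: swap_subst_def swp_eq[symmetric] swp_def)
    also have "\<dots> = fst L (swp u v y)" by simp
    finally show ?thesis .
  qed
  moreover have "(\<Sum>x\<in>UNIV. fst L x * lit_const (swap_subst u v x)) = 0"
    by (simp add: swap_subst_def)
  ultimately show ?thesis by (simp add: subst_lin_def)
qed

lemma cp_eq: "cp_derivable H C \<Longrightarrow> C = C' \<Longrightarrow> cp_derivable H C'" by simp

lemma pbc_nn: "pbc [(1, Neg a), (1, Neg b)] 1 = ((\<lambda>y. - (if a = y then 1 else 0) - (if b = y then 1 else 0)), -1)"
  by (simp add: pbc_def lin_of_terms_def fun_eq_iff)

lemma pbc_dc: "dom_clause a b = ((\<lambda>y. (if a = y then 1 else 0) - (if b = y then 1 else 0)), 0)"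
  by (simp add: dom_clause_def pbc_def lin_of_terms_def fun_eq_iff)

lemma subst_nn: "subst_pbc (swap_subst u v) (pbc [(1, Neg a), (1, Neg b)] 1 :: 'v::finite pbc)
   = pbc [(1, Neg (swp u v a)), (1, Neg (swp u v b))] 1"
  unfolding subst_swap pbc_nn by (auto simp: fun_eq_iff swp_eq)

lemma subst_dc: "subst_pbc (swap_subst u v) (dom_clause a b :: 'v::finite pbc)
   = dom_clause (swp u v a) (swp u v b)"
  unfolding subst_swap pbc_dc by (auto simp: fun_eq_iff swp_eq)

lemma dom_trans:
  assumes "sym E" "irrefl E" "dominates E x u" "dominates E u v" "x \<noteq> v"
  shows "dominates E x v"
  unfolding dominates_def
proof (intro conjI subsetI)
  show "x \<noteq> v" by fact
  fix w assume w: "w \<in> nbhd E v - {x}"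
  have su: "nbhd E u - {x} \<subseteq> nbhd E x - {u}" "nbhd E v - {u} \<subseteq> nbhd E u - {v}" "x \<noteq> u" "u \<noteq> v"
    using assms(3,4) unfolding dominates_def by auto
  have wv: "w \<noteq> v" using w assms(2) by (auto simp: nbhd_def irrefl_def)
  show "w \<in> nbhd E x - {v}"
  proof (cases "w = u")
    case False
    then show ?thesis using w wv su by blast
  next
    case True
    hence "(v, u) \<in> E" using w by (simp add: nbhd_def)
    hence "(u, v) \<in> E" using assms(1) by (meson symD)
    hence "v \<in> nbhd E x" using su assms(5) by (auto simp: nbhd_def)
    hence "(v, x) \<in> E" using assms(1) by (auto simp: nbhd_def dest: symD)
    hence "x \<in> nbhd E u" using su by (auto simp: nbhd_def)
    hence "(x, u) \<in> E" using assms(1) by (auto simp: nbhd_def dest: symD)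
    thus ?thesis using True wv by (simp add: nbhd_def)
  qed
qed

theorem mainTheorem12:
  fixes E :: "('v::finite \<times> 'v) set" and ord :: "('v \<times> 'v) set"
    and u v :: 'v and \<D> :: "'v pbc set" and k :: "int option"
  assumes "sym E" and "irrefl E"
    and "strict_linear_order ord"
    and "u \<noteq> v" and "dominates E u v" and "(u, v) \<in> ord"
    and "\<D> \<subseteq> {dom_clause x y | x y. x \<noteq> y \<and> dominates E x y \<and> (x, y) \<in> ord
                                    \<and> (x = u \<or> (x, u) \<in> ord)}"
    and "\<And>x y. x \<noteq> y \<Longrightarrow> dominates E x y \<Longrightarrow> (x, y) \<in> ord \<Longrightarrow> (x, u) \<in> ord
                 \<Longrightarrow> dom_clause x y \<in> \<D>"
  shows "derives_set
           (clique_formula E \<union> \<D> \<union> {obj_le (clique_obj UNIV) k} \<union> {neg_pbc (dom_clause u v)})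
           (subst_pbc (swap_subst u v) ` (clique_formula E \<union> \<D> \<union> {dom_clause u v})
            \<union> {lin_le (subst_lin (swap_subst u v) (clique_obj UNIV)) (clique_obj UNIV)})"
proof -
  define H where "H = clique_formula E \<union> \<D> \<union> {obj_le (clique_obj UNIV) k} \<union> {neg_pbc (dom_clause u v)}"
  have trans: "trans ord" and irr: "irrefl ord" using assms(3)
    by (auto simp: strict_linear_order_on_def)
  have N: "cp_derivable H (neg_pbc (dom_clause u v))" by (rule cp_derivable.axiom) (simp add: H_def)
  have V1: "cp_derivable H ((\<lambda>y. if v = y then 1 else 0), 1)"
    by (rule cp_eq[OF cp_derivable.add[OF N cp_derivable.lit_axiom_pos[of H u]]])
       (auto simp: add_pbc_def neg_pbc_def pbc_dc pbc_def lin_of_terms_def fun_eq_iff)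
  have U0: "cp_derivable H ((\<lambda>y. - (if u = y then 1 else 0)), 0)"
    by (rule cp_eq[OF cp_derivable.add[OF N cp_derivable.lit_axiom_neg[of H v]]])
       (auto simp: add_pbc_def neg_pbc_def pbc_dc pbc_def lin_of_terms_def fun_eq_iff)
  have L1: "cp_derivable H (pbc [(1, Neg u), (1, Neg b)] 1)" for b
    by (rule cp_eq[OF cp_derivable.add[OF U0 cp_derivable.lit_axiom_neg[of H b]]])
       (auto simp: add_pbc_def pbc_nn pbc_def lin_of_terms_def fun_eq_iff)
  have L1': "cp_derivable H (pbc [(1, Neg b), (1, Neg u)] 1)" for b
    by (rule cp_eq[OF cp_derivable.add[OF U0 cp_derivable.lit_axiom_neg[of H b]]])
       (auto simp: add_pbc_def pbc_nn pbc_def lin_of_terms_def fun_eq_iff)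
  have L2: "cp_derivable H (dom_clause v z)" for z
    by (rule cp_eq[OF cp_derivable.add[OF V1 cp_derivable.lit_axiom_neg[of H z]]])
       (auto simp: add_pbc_def pbc_dc pbc_def lin_of_terms_def fun_eq_iff)
  have L3: "cp_derivable H (dom_clause x u)" for x
    by (rule cp_eq[OF cp_derivable.add[OF U0 cp_derivable.lit_axiom_pos[of H x]]])
       (auto simp: add_pbc_def pbc_dc pbc_def lin_of_terms_def fun_eq_iff)
  have sw_u: "swp u v u = v" and sw_v: "swp u v v = u" and sw_o: "\<And>x. x \<noteq> u \<Longrightarrow> x \<noteq> v \<Longrightarrow> swp u v x = x"
    by (auto simp: swp_def)
  have CF: "cp_derivable H (subst_pbc (swap_subst u v) C)" if hC: "C \<in> clique_formula E" for C
  proof -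
    obtain a b where C: "C = pbc [(1, Neg a), (1, Neg b)] 1" and ab: "a \<noteq> b" "(a, b) \<notin> E"
      using hC unfolding clique_formula_def by blast
    have mem: "pbc [(1, Neg a'), (1, Neg b')] 1 \<in> H" if "a' \<noteq> b'" "(a', b') \<notin> E" for a' b'
      using that by (auto simp: H_def clique_formula_def)
    have S: "subst_pbc (swap_subst u v) C = pbc [(1, Neg (swp u v a)), (1, Neg (swp u v b))] 1"
      by (simp add: C subst_nn)
    show ?thesis
    proof (cases "a = v \<or> b = v")
      case True
      then show ?thesis unfolding S using L1 L1' sw_v by auto
    next
      case False
      show ?thesis
      proof (cases "a = u")
        case True
        have "b \<notin> nbhd E v" using assms(5) ab True False by (auto simp: dominates_def nbhd_def)
        hence "(v, b) \<notin> E" by (simp add: nbhd_def)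
        then show ?thesis unfolding S using True False ab sw_u sw_o
          by (auto intro!: cp_derivable.axiom mem)
      next
        case au: False
        show ?thesis
        proof (cases "b = u")
          case True
          have "a \<notin> nbhd E v" using assms(5) ab True False assms(1)
            by (auto simp: dominates_def nbhd_def dest: symD)
          hence "(a, v) \<notin> E" using assms(1) by (auto simp: nbhd_def dest: symD)
          then show ?thesis unfolding S using True False ab sw_u sw_o au
            by (auto intro!: cp_derivable.axiom mem)
        next
          case False
          then show ?thesis unfolding S using \<open>\<not> (a = v \<or> b = v)\<close> ab sw_o au
            by (auto intro!: cp_derivable.axiom mem)
        qed
      qed
    qed
  qed
  have DD: "cp_derivable H (subst_pbc (swap_subst u v) C)" if hC: "C \<in> \<D>" for C
  proof -
    obtain x y where C: "C = dom_clause x y" and xy: "x \<noteq> y" "dominates E x y" "(x, y) \<in> ord"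
      "x = u \<or> (x, u) \<in> ord"
      using hC assms(7) by blast
    have S: "subst_pbc (swap_subst u v) C = dom_clause (swp u v x) (swp u v y)"
      by (simp add: C subst_dc)
    show ?thesis
    proof (cases "x = u")
      case True then show ?thesis unfolding S using sw_u L2 by simp
    next
      case False
      hence xu: "(x, u) \<in> ord" using xy by auto
      have xv: "x \<noteq> v" using xu assms(6) trans irr
        by (auto simp: irrefl_def dest: transD)
      have swx: "swp u v x = x" using sw_o False xv .
      show ?thesis
      proof (cases "y = v")
        case True then show ?thesis unfolding S using swx sw_v L3 by simp
      next
        case yv: False
        show ?thesis
        proof (cases "y = u")
          case True
          have "dominates E x v" using dom_trans[OF assms(1,2)] xy True assms(5) xv by blast
          moreover have "(x, v) \<in> ord" using xu assms(6) trans by (auto dest: transD)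
          ultimately have "dom_clause x v \<in> \<D>" using assms(8) xv xu by blast
          then show ?thesis unfolding S using swx True sw_u
            by (auto intro!: cp_derivable.axiom simp: H_def)
        next
          case False
          then show ?thesis unfolding S using swx sw_o[OF False yv] hC C
            by (auto intro!: cp_derivable.axiom simp: H_def)
        qed
      qed
    qed
  qed
  have UV: "cp_derivable H (subst_pbc (swap_subst u v) (dom_clause u v))"
    unfolding subst_dc using sw_u sw_v L2 by simp
  have fobj: "fst (clique_obj (UNIV :: 'v set)) y = -1" for y
  proof -
    have "(\<Sum>w\<in>(UNIV :: 'v set). lit_coef (Neg w) y) = (\<Sum>w\<in>UNIV. if w = y then -1 else 0)"
      by (rule sum.cong) auto
    thus ?thesis by (simp add: clique_obj_def)
  qed
  have OB: "derives H (lin_le (subst_lin (swap_subst u v) (clique_obj UNIV)) (clique_obj UNIV))"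
  proof -
    have "neg_pbc (lin_le (subst_lin (swap_subst u v) (clique_obj UNIV)) (clique_obj UNIV)) = contradiction"
      by (simp add: subst_lin_swap lin_le_def neg_pbc_def contradiction_def fobj)
    thus ?thesis unfolding derives_def by (auto intro: cp_derivable.axiom)
  qed
  show ?thesis
    unfolding derives_set_def H_def[symmetric]
    using CF DD UV OB by (auto simp: derives_def)
qed

end
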